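(* Let $p_1,p_2,p_3,\dots=2,3,5,7,\dots$ be the list of all primes, $T=\bigoplus_{n\in\mathbb N}\mathbb Z(p_n^n)$, $P=\prod_{n\in\mathbb N}\mathbb Z(p_n^n)$, and $\mathbf z\in P$ the element whose $n$-th coordinate is $1\in\mathbb Z(p_n^n)$ for every $n$. Let $G=\{\mathbf y\in P:\ k\mathbf y\in T+\mathbb Z\mathbf z \text{ for some integer } k\neq 0\}$, the purification of $T+\mathbb Z\mathbf z$ in $P$, so that $G$ is pure in $P$, $T$ is the torsion subgroup of $G$, and $G/T\cong\mathbb Q$. Then $G$ is strongly co-Hopfian and $G/T$ is strongly co-Hopfian, but $T$ is not strongly co-Hopfian; in particular $G$ is strongly co-Hopfian but not uniformly strongly co-Hopfian.
   Context: All groups are abelian. A group $G$ is strongly co-Hopfian if for every endomorphism $f$ of $G$ there is $n\in\mathbb N$ with $f^n(G)=f^{n+1}(G)$; it is uniformly strongly co-Hopfian if there is a fixed $m$ with $\phi^m(G)=\phi^{m+1}(G)$ for all endomorphisms $\phi$. $\mathbb Z(q)$ denotes the cyclic group of order $q$. *)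

theory Defs
  imports "HOL-Algebra.Algebra" "HOL-Computational_Algebra.Primes" "HOL-Library.Infinite_Set"
begin

text \<open>Abelian groups are HOL-Algebra group records, written multiplicatively
(the operation \<open>mult\<close> plays the role of +). Endomorphisms are elements of \<open>hom H H\<close>.\<close>

definition strongly_coHopfian :: "('a, 'b) monoid_scheme \<Rightarrow> bool" where
  "strongly_coHopfian H \<longleftrightarrow>
     (\<forall>f \<in> hom H H. \<exists>n::nat. (f ^^ n) ` carrier H = (f ^^ Suc n) ` carrier H)"

definition uniformly_strongly_coHopfian :: "('a, 'b) monoid_scheme \<Rightarrow> bool" where
  "uniformly_strongly_coHopfian H \<longleftrightarrow>
     (\<exists>m::nat. \<forall>f \<in> hom H H. (f ^^ m) ` carrier H = (f ^^ Suc m) ` carrier H)"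

text \<open>The i-th prime (0-indexed): nth_prime 0 = 2, nth_prime 1 = 3, ...\<close>
definition nth_prime :: "nat \<Rightarrow> nat" where
  "nth_prime i = enumerate {p::nat. Factorial_Ring.prime p} i"

text \<open>Coordinate i (i = 0,1,2,...) corresponds to the paper's index n = i+1:
  the cyclic group Z(p_n^n) with p_n = nth_prime i, n = i+1.\<close>
definition ord_q :: "nat \<Rightarrow> int" where
  "ord_q i = int (nth_prime i ^ Suc i)"

definition Pgrp :: "(nat \<Rightarrow> int) monoid" where
  "Pgrp = \<lparr> partial_object.carrier = {y. \<forall>i. 0 \<le> y i \<and> y i < ord_q i},
            monoid.mult = (\<lambda>x y i. (x i + y i) mod ord_q i),
            monoid.one = (\<lambda>i. 0) \<rparr>"

definition smulP :: "int \<Rightarrow> (nat \<Rightarrow> int) \<Rightarrow> (nat \<Rightarrow> int)" where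
  "smulP k y = (\<lambda>i. (k * y i) mod ord_q i)"

definition Tset :: "(nat \<Rightarrow> int) set" where
  "Tset = {y \<in> carrier Pgrp. finite {i. y i \<noteq> 0}}"

definition zP :: "nat \<Rightarrow> int" where
  "zP = (\<lambda>i. 1 mod ord_q i)"

definition TZz :: "(nat \<Rightarrow> int) set" where
  "TZz = {(\<lambda>i. (t i + m * zP i) mod ord_q i) | t m. t \<in> Tset}"

definition Gset :: "(nat \<Rightarrow> int) set" where
  "Gset = {y \<in> carrier Pgrp. \<exists>k::int. k \<noteq> 0 \<and> smulP k y \<in> TZz}"

definition Ggrp :: "(nat \<Rightarrow> int) monoid" where
  "Ggrp = Pgrp\<lparr>carrier := Gset\<rparr>"

definition Tgrp :: "(nat \<Rightarrow> int) monoid" where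
  "Tgrp = Pgrp\<lparr>carrier := Tset\<rparr>"

end

theory Submission
  imports Defs
begin

lemma abstract_sch:
  fixes Q (structure)
  assumes cg: "comm_group Q"
    and TF: "\<And>x k. x \<in> carrier Q \<Longrightarrow> (k::int) \<noteq> 0 \<Longrightarrow> x [^] k = \<one> \<Longrightarrow> x = \<one>"
    and DIV: "\<And>x k. x \<in> carrier Q \<Longrightarrow> (k::int) \<noteq> 0 \<Longrightarrow> \<exists>w\<in>carrier Q. w [^] k = x"
    and R1: "\<And>x u. x \<in> carrier Q \<Longrightarrow> u \<in> carrier Q \<Longrightarrow> u \<noteq> \<one> \<Longrightarrow>
               \<exists>(a::int) (b::int). a \<noteq> 0 \<and> x [^] a = u [^] b"
  shows "strongly_coHopfian Q"
  unfolding strongly_coHopfian_def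
proof
  fix f assume f: "f \<in> hom Q Q"
  interpret comm_group Q by (rule cg)
  have gh: "group_hom Q Q f" using f by (simp add: group_hom_def group_hom_axioms_def is_group)
  show "\<exists>n. (f ^^ n) ` carrier Q = (f ^^ Suc n) ` carrier Q"
  proof (cases "\<forall>x\<in>carrier Q. f x = \<one>")
    case True
    have 1: "f ` carrier Q = {\<one>}" using True by force
    have "(f ^^ Suc 1) ` carrier Q = f ` (f ` carrier Q)" by (simp add: image_comp)
    also have "\<dots> = {\<one>}" using 1 True by auto
    finally show ?thesis using 1 by (intro exI[of _ 1]) simp
  next
    case False
    then obtain u0 where u0: "u0 \<in> carrier Q" "f u0 \<noteq> \<one>" by auto
    have fc: "\<And>x. x \<in> carrier Q \<Longrightarrow> f x \<in> carrier Q" using f by (auto simp: hom_def)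
    have "carrier Q \<subseteq> f ` carrier Q"
    proof
      fix y assume y: "y \<in> carrier Q"
      obtain a b :: int where ab: "a \<noteq> 0" "y [^] a = f u0 [^] b" using R1[OF y fc[OF u0(1)] u0(2)] by blast
      obtain w where w: "w \<in> carrier Q" "w [^] a = u0" using DIV[OF u0(1) ab(1)] by blast
      have pw: "(w [^] b) [^] a = (w [^] a) [^] b"
      proof -
        have "(w [^] b) [^] a = w [^] (b * a)" by (rule int_pow_pow[OF w(1)])
        also have "\<dots> = w [^] (a * b)" by (metis mult.commute)
        also have "\<dots> = (w [^] a) [^] b" by (rule int_pow_pow[OF w(1), symmetric])
        finally show ?thesis .
      qed
      have "f (w [^] b) [^] a = f ((w [^] b) [^] a)" using gh w by (simp add: group_hom.hom_int_pow)
      also have "\<dots> = f ((w [^] a) [^] b)" by (simp only: pw)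
      also have "\<dots> = f u0 [^] b" using gh w u0 by (simp add: group_hom.hom_int_pow)
      finally have e: "f (w [^] b) [^] a = y [^] a" using ab by simp
      have fw: "f (w [^] b) \<in> carrier Q" using fc w by simp
      have "(f (w [^] b) \<otimes> inv y) [^] a = f (w [^] b) [^] a \<otimes> (inv y) [^] a"
        by (rule int_pow_distrib[OF fw inv_closed[OF y]])
      also have "\<dots> = y [^] a \<otimes> inv (y [^] a)" by (simp only: e int_pow_inv[OF y])
      also have "\<dots> = \<one>" by (rule r_inv[OF int_pow_closed[OF y]])
      finally have "(f (w [^] b) \<otimes> inv y) [^] a = \<one>" .
      then have eq1: "f (w [^] b) \<otimes> inv y = \<one>" by (rule TF[OF m_closed[OF fw inv_closed[OF y]] ab(1)])
      have "f (w [^] b) = f (w [^] b) \<otimes> (inv y \<otimes> y)" using fw y by simp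
      also have "\<dots> = (f (w [^] b) \<otimes> inv y) \<otimes> y" using fw y by (simp add: m_assoc)
      also have "\<dots> = y" using eq1 y by simp
      finally have "f (w [^] b) = y" .
      then show "y \<in> f ` carrier Q" using w by blast
    qed
    then have "f ` carrier Q = carrier Q" using fc by blast
    then show ?thesis by (intro exI[of _ 0]) simp
  qed
qed


lemma nth_prime_prime: "Factorial_Ring.prime (nth_prime i)"
  unfolding nth_prime_def using enumerate_in_set[OF primes_infinite] by simp

lemma nth_prime_inj: "inj nth_prime"
  unfolding nth_prime_def[abs_def] using inj_enumerate[OF primes_infinite] by simp

lemma ord_q_eq: "ord_q i = int (nth_prime i) ^ Suc i"
  unfolding ord_q_def by simp

lemma ord_q_gt1: "ord_q i > 1"
proof -
  have "int (nth_prime i) > 1" using nth_prime_prime[of i] prime_gt_1_nat by simp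
  then have "int (nth_prime i) ^ Suc i > 1" by (metis one_less_power zero_less_Suc)
  then show ?thesis unfolding ord_q_eq .
qed

lemma ord_q_pos[simp]: "ord_q i > 0" using ord_q_gt1[of i] by simp

lemma intprime: "Factorial_Ring.prime (int (nth_prime i))" using nth_prime_prime by simp

lemma finite_dvd:
  assumes "(k::int) \<noteq> 0"
  shows "finite {i. int (nth_prime i) dvd k}"
proof -
  have "{i. int (nth_prime i) dvd k} \<subseteq> nth_prime -` {..nat \<bar>k\<bar>}"
  proof
    fix i assume "i \<in> {i. int (nth_prime i) dvd k}"
    then have "int (nth_prime i) dvd k" by simp
    then have "\<bar>int (nth_prime i)\<bar> \<le> \<bar>k\<bar>" by (rule dvd_imp_le_int[OF assms])
    then have "nth_prime i \<le> nat \<bar>k\<bar>" by linarith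
    then show "i \<in> nth_prime -` {..nat \<bar>k\<bar>}" by simp
  qed
  moreover have "finite (nth_prime -` {..nat \<bar>k\<bar>})"
    by (rule finite_vimageI[OF finite_atMost nth_prime_inj])
  ultimately show ?thesis by (rule finite_subset)
qed

lemma ev_ndvd:
  assumes "(k::int) \<noteq> 0"
  shows "\<forall>\<^sub>F i in cofinite. \<not> int (nth_prime i) dvd k"
  using finite_dvd[OF assms] by (simp add: eventually_cofinite)

lemma coprime_q_iff: "coprime k (ord_q i) \<longleftrightarrow> \<not> int (nth_prime i) dvd k"
proof
  assume c: "coprime k (ord_q i)"
  show "\<not> int (nth_prime i) dvd k"
  proof
    assume d: "int (nth_prime i) dvd k"
    have "int (nth_prime i) dvd ord_q i" unfolding ord_q_eq by simp
    then have "is_unit (int (nth_prime i))" using coprime_common_divisor[OF c d] by blast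
    then show False using intprime[of i] not_prime_unit by blast
  qed
next
  assume "\<not> int (nth_prime i) dvd k"
  then show "coprime k (ord_q i)" unfolding ord_q_eq by (rule prime_imp_power_coprime[OF intprime])
qed

lemma ev_coprime:
  assumes "(k::int) \<noteq> 0"
  shows "\<forall>\<^sub>F i in cofinite. coprime k (ord_q i)"
  using ev_ndvd[OF assms] by (simp add: coprime_q_iff)

lemma coprime_qq: "i \<noteq> j \<Longrightarrow> coprime (ord_q i) (ord_q j)"
proof -
  assume "i \<noteq> j"
  then have "nth_prime i \<noteq> nth_prime j" using nth_prime_inj by (meson injD)
  then have "coprime (int (nth_prime i)) (int (nth_prime j))"
    using Factorial_Ring.primes_coprime intprime by (metis of_nat_eq_iff)
  then show ?thesis unfolding ord_q_eq by simp
qed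

definition minv :: "int \<Rightarrow> int \<Rightarrow> int" where
  "minv a n = (SOME s. (a * s) mod n = 1 mod n)"

lemma minv: "coprime a n \<Longrightarrow> (a * minv a n) mod n = 1 mod n"
proof -
  assume "coprime a n"
  then obtain u v where "u * a + v * n = 1" using bezout_int[of a n] by auto
  then have "(a * u) mod n = 1 mod n" by (metis mod_mult_self3 mult.commute add.commute)
  then show ?thesis unfolding minv_def by (rule someI)
qed

lemma carrierP: "y \<in> carrier Pgrp \<longleftrightarrow> (\<forall>i. 0 \<le> y i \<and> y i < ord_q i)"
  by (simp add: Pgrp_def)

lemma multP: "x \<otimes>\<^bsub>Pgrp\<^esub> y = (\<lambda>i. (x i + y i) mod ord_q i)"
  by (simp add: Pgrp_def)

lemma oneP: "\<one>\<^bsub>Pgrp\<^esub> = (\<lambda>i. 0)"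
  by (simp add: Pgrp_def)

lemma modrange: "(\<lambda>i. f i mod ord_q i) \<in> carrier Pgrp"
  by (simp add: carrierP)

lemma carrier_mod: "y \<in> carrier Pgrp \<Longrightarrow> y i mod ord_q i = y i"
  by (simp add: carrierP)

lemma Pgrp_comm: "comm_group Pgrp"
proof (rule comm_groupI)
  fix x assume x: "x \<in> carrier Pgrp"
  show "\<exists>y\<in>carrier Pgrp. y \<otimes>\<^bsub>Pgrp\<^esub> x = \<one>\<^bsub>Pgrp\<^esub>"
    by (rule bexI[of _ "\<lambda>i. (- x i) mod ord_q i"]) (auto simp: multP oneP modrange mod_add_left_eq)
  show "\<one>\<^bsub>Pgrp\<^esub> \<otimes>\<^bsub>Pgrp\<^esub> x = x" using x by (simp add: multP oneP carrier_mod)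
next
  fix x y z assume "x \<in> carrier Pgrp" "y \<in> carrier Pgrp" "z \<in> carrier Pgrp"
  show "x \<otimes>\<^bsub>Pgrp\<^esub> y \<otimes>\<^bsub>Pgrp\<^esub> z = x \<otimes>\<^bsub>Pgrp\<^esub> (y \<otimes>\<^bsub>Pgrp\<^esub> z)"
    by (simp add: multP mod_add_left_eq mod_add_right_eq add.assoc)
next
  fix x y assume "x \<in> carrier Pgrp" "y \<in> carrier Pgrp"
  show "x \<otimes>\<^bsub>Pgrp\<^esub> y = y \<otimes>\<^bsub>Pgrp\<^esub> x"
    by (simp add: multP add.commute)
qed (auto simp: multP oneP modrange carrierP)

lemma zP_eq: "zP = (\<lambda>i. 1)"
  using ord_q_gt1 by (auto simp: zP_def)

lemma Tset_iff: "y \<in> Tset \<longleftrightarrow> y \<in> carrier Pgrp \<and> (\<forall>\<^sub>F i in cofinite. y i = 0)"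
  by (simp add: Tset_def eventually_cofinite)

lemma TZz_iff: "u \<in> TZz \<longleftrightarrow> u \<in> carrier Pgrp \<and> (\<exists>m. \<forall>\<^sub>F i in cofinite. u i = m mod ord_q i)"
proof
  assume "u \<in> TZz"
  then obtain t m where u: "u = (\<lambda>i. (t i + m) mod ord_q i)" and t: "t \<in> Tset"
    unfolding TZz_def zP_eq by auto
  have "\<forall>\<^sub>F i in cofinite. t i = 0" using t by (simp add: Tset_iff)
  then have "\<forall>\<^sub>F i in cofinite. u i = m mod ord_q i" by eventually_elim (simp add: u)
  moreover have "u \<in> carrier Pgrp" unfolding u by (rule modrange)
  ultimately show "u \<in> carrier Pgrp \<and> (\<exists>m. \<forall>\<^sub>F i in cofinite. u i = m mod ord_q i)"
    by blast
next
  assume a: "u \<in> carrier Pgrp \<and> (\<exists>m. \<forall>\<^sub>F i in cofinite. u i = m mod ord_q i)"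
  then obtain m where m: "\<forall>\<^sub>F i in cofinite. u i = m mod ord_q i" by blast
  define t where "t = (\<lambda>i. (u i - m) mod ord_q i)"
  have "\<forall>\<^sub>F i in cofinite. t i = 0" using m by eventually_elim (simp add: t_def mod_diff_left_eq)
  then have tT: "t \<in> Tset" by (simp add: Tset_iff t_def modrange)
  have "u = (\<lambda>i. (t i + m * zP i) mod ord_q i)"
    using a by (auto simp: t_def zP_eq carrier_mod mod_add_left_eq)
  then show "u \<in> TZz" unfolding TZz_def using tT by blast
qed

lemma Gset_iff: "y \<in> Gset \<longleftrightarrow> y \<in> carrier Pgrp \<and>
   (\<exists>k m. k \<noteq> 0 \<and> (\<forall>\<^sub>F i in cofinite. (k * y i) mod ord_q i = m mod ord_q i))"
  unfolding Gset_def TZz_iff smulP_def by (auto simp: modrange)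

lemma Gset_pos:
  assumes "y \<in> Gset"
  obtains k m where "k > 0" "\<forall>\<^sub>F i in cofinite. (k * y i) mod ord_q i = m mod ord_q i"
proof -
  obtain k m where km: "k \<noteq> 0" "\<forall>\<^sub>F i in cofinite. (k * y i) mod ord_q i = m mod ord_q i"
    using assms Gset_iff by blast
  show ?thesis
  proof (cases "k > 0")
    case True then show ?thesis using km that by blast
  next
    case False
    have "\<forall>\<^sub>F i in cofinite. (-k * y i) mod ord_q i = (-m) mod ord_q i"
      using km(2) by eventually_elim (metis minus_mult_left mod_minus_eq)
    then show ?thesis using that[of "-k"] False km(1) by simp
  qed
qed

lemma Gset_intro:
  assumes "y \<in> carrier Pgrp" "k \<noteq> 0" "\<forall>\<^sub>F i in cofinite. (k * y i) mod ord_q i = m mod ord_q i"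
  shows "y \<in> Gset"
  using assms Gset_iff by blast

lemma T_sub_G: "Tset \<subseteq> Gset"
proof
  fix y assume "y \<in> Tset"
  then show "y \<in> Gset" using Tset_iff[of y]
    by (intro Gset_intro[of y 1 0]) (auto elim: eventually_mono)
qed

lemma G_carrier: "y \<in> Gset \<Longrightarrow> y \<in> carrier Pgrp" by (simp add: Gset_iff)

lemma G_modify:
  assumes "y \<in> Gset" "y' \<in> carrier Pgrp" "\<forall>\<^sub>F i in cofinite. y' i = y i"
  shows "y' \<in> Gset"
proof -
  obtain k m where km: "k \<noteq> 0" "\<forall>\<^sub>F i in cofinite. (k * y i) mod ord_q i = m mod ord_q i"
    using assms Gset_iff by blast
  have "\<forall>\<^sub>F i in cofinite. (k * y' i) mod ord_q i = m mod ord_q i"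
    using km(2) assms(3) by eventually_elim simp
  then show ?thesis using Gset_intro assms km by blast
qed

lemma G_pure:
  assumes "y \<in> carrier Pgrp" "c \<noteq> 0" "(\<lambda>i. (c * y i) mod ord_q i) \<in> Gset"
  shows "y \<in> Gset"
proof -
  obtain k m where km: "k \<noteq> 0" "\<forall>\<^sub>F i in cofinite. (k * ((c * y i) mod ord_q i)) mod ord_q i = m mod ord_q i"
    using assms Gset_iff[of "(\<lambda>i. (c * y i) mod ord_q i)"] by auto
  have "\<forall>\<^sub>F i in cofinite. ((k * c) * y i) mod ord_q i = m mod ord_q i"
    using km(2) by eventually_elim (simp add: mod_mult_right_eq mult.assoc)
  then show ?thesis using Gset_intro assms km by (metis mult_eq_0_iff)
qed

lemma G_subgroup: "subgroup Gset Pgrp"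
proof (rule group.subgroupI)
  interpret comm_group Pgrp by (rule Pgrp_comm)
  show "group Pgrp" by (rule is_group)
  show "Gset \<subseteq> carrier Pgrp" using G_carrier by blast
  show "Gset \<noteq> {}" using T_sub_G Tset_iff[of "\<lambda>i. 0"] carrierP by auto
  fix x assume x: "x \<in> Gset"
  then have xc: "x \<in> carrier Pgrp" by (rule G_carrier)
  have ix: "inv\<^bsub>Pgrp\<^esub> x = (\<lambda>i. (- x i) mod ord_q i)"
    by (rule inv_equality) (use xc in \<open>auto simp: multP oneP modrange mod_add_left_eq\<close>)
  obtain k m where km: "k \<noteq> 0" "\<forall>\<^sub>F i in cofinite. (k * x i) mod ord_q i = m mod ord_q i"
    using x Gset_iff by blast
  have "\<forall>\<^sub>F i in cofinite. (k * ((- x i) mod ord_q i)) mod ord_q i = (-m) mod ord_q i"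
    using km(2) by eventually_elim (metis minus_mult_right mod_minus_eq mod_mult_right_eq)
  then show "inv\<^bsub>Pgrp\<^esub> x \<in> Gset" unfolding ix using km(1) by (intro Gset_intro) (auto simp: modrange)
  fix y assume y: "y \<in> Gset"
  obtain k' m' where km': "k' \<noteq> 0" "\<forall>\<^sub>F i in cofinite. (k' * y i) mod ord_q i = m' mod ord_q i"
    using y Gset_iff by blast
  have "\<forall>\<^sub>F i in cofinite. ((k*k') * ((x i + y i) mod ord_q i)) mod ord_q i = (k' * m + k * m') mod ord_q i"
    using km(2) km'(2)
  proof eventually_elim
    case (elim i)
    have "((k*k') * ((x i + y i) mod ord_q i)) mod ord_q i = ((k*k') * (x i + y i)) mod ord_q i"
      by (rule mod_mult_right_eq)
    also have "\<dots> = (k' * (k * x i) + k * (k' * y i)) mod ord_q i"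
      by (simp add: algebra_simps)
    also have "\<dots> = (k' * ((k * x i) mod ord_q i) + k * ((k' * y i) mod ord_q i)) mod ord_q i"
      by (metis mod_add_eq mod_mult_right_eq)
    also have "\<dots> = (k' * m + k * m') mod ord_q i" using elim
      by (metis mod_add_eq mod_mult_right_eq)
    finally show ?case .
  qed
  then show "x \<otimes>\<^bsub>Pgrp\<^esub> y \<in> Gset" unfolding multP using km(1) km'(1)
    by (intro Gset_intro) (auto simp: modrange)
qed

lemma G_comm: "comm_group Ggrp"
proof -
  interpret comm_group Pgrp by (rule Pgrp_comm)
  have g: "group (Pgrp\<lparr>carrier := Gset\<rparr>)" by (rule subgroup_imp_group[OF G_subgroup])
  show ?thesis unfolding Ggrp_def
  proof (rule group.group_comm_groupI[OF g])
    fix x y assume "x \<in> carrier (Pgrp\<lparr>carrier := Gset\<rparr>)" "y \<in> carrier (Pgrp\<lparr>carrier := Gset\<rparr>)"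
    then have "x \<in> carrier Pgrp" "y \<in> carrier Pgrp" using G_carrier by auto
    then show "x \<otimes>\<^bsub>Pgrp\<lparr>carrier := Gset\<rparr>\<^esub> y = y \<otimes>\<^bsub>Pgrp\<lparr>carrier := Gset\<rparr>\<^esub> x"
      using m_comm by simp
  qed
qed

lemma carrierG[simp]: "carrier Ggrp = Gset" by (simp add: Ggrp_def)
lemma multG[simp]: "x \<otimes>\<^bsub>Ggrp\<^esub> y = x \<otimes>\<^bsub>Pgrp\<^esub> y" by (simp add: Ggrp_def)
lemma oneG[simp]: "\<one>\<^bsub>Ggrp\<^esub> = \<one>\<^bsub>Pgrp\<^esub>" by (simp add: Ggrp_def)


definition unitv :: "nat \<Rightarrow> nat \<Rightarrow> int" where
  "unitv n = (\<lambda>i. if i = n then 1 else 0)"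

lemma unitv_T: "unitv n \<in> Tset"
proof -
  have "unitv n \<in> carrier Pgrp" using ord_q_gt1 by (auto simp: carrierP unitv_def)
  moreover have "\<forall>\<^sub>F i in cofinite. unitv n i = 0"
    by (simp add: eventually_cofinite unitv_def)
  ultimately show ?thesis by (simp add: Tset_iff)
qed

lemma images_differ:
  assumes "unitv n \<in> S"
    and "\<And>y k. y \<in> S \<Longrightarrow> (g ^^ k) y n = (int (nth_prime n) ^ k * y n) mod ord_q n"
  shows "(g ^^ n) ` S \<noteq> (g ^^ Suc n) ` S"
proof
  assume eq: "(g ^^ n) ` S = (g ^^ Suc n) ` S"
  let ?p = "int (nth_prime n)"
  have pp: "?p > 0" using intprime[of n] prime_gt_0_int by blast
  have "(g ^^ n) (unitv n) \<in> (g ^^ Suc n) ` S" using eq assms(1) by blast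
  then obtain x where x: "x \<in> S" "(g ^^ Suc n) x = (g ^^ n) (unitv n)" by auto
  have "(g ^^ n) (unitv n) n = ?p ^ n mod ?p ^ Suc n"
    using assms(2)[OF assms(1)] by (simp add: unitv_def ord_q_eq)
  also have "\<dots> = ?p ^ n"
  proof -
    have p1: "?p > 1" using prime_gt_1_int[OF intprime[of n]] .
    have "?p ^ n < ?p ^ Suc n" using power_strict_increasing_iff[OF p1, of n "Suc n"] by simp
    then show ?thesis using pp by (intro mod_pos_pos_trivial) auto
  qed
  finally have a: "(g ^^ n) (unitv n) n = ?p ^ n" .
  have "(g ^^ Suc n) x n = (?p ^ Suc n * x n) mod ?p ^ Suc n"
    using assms(2)[OF x(1), of "Suc n"] unfolding ord_q_eq .
  then have "(g ^^ Suc n) x n = 0" by simp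
  then show False using x(2) a pp by simp
qed

definition mulp :: "(nat \<Rightarrow> int) \<Rightarrow> nat \<Rightarrow> int" where
  "mulp y = (\<lambda>i. (int (nth_prime i) * y i) mod ord_q i)"

lemma mulp_iter: "y \<in> carrier Pgrp \<Longrightarrow> (mulp ^^ k) y n = (int (nth_prime n) ^ k * y n) mod ord_q n"
proof (induction k)
  case 0 then show ?case by (simp add: carrier_mod)
next
  case (Suc k) then show ?case by (simp add: mulp_def mod_mult_right_eq mult.assoc)
qed

lemma multT: "x \<otimes>\<^bsub>Tgrp\<^esub> y = x \<otimes>\<^bsub>Pgrp\<^esub> y" by (simp add: Tgrp_def)

lemma mulp_hom: "mulp \<in> hom Tgrp Tgrp"
proof (rule homI)
  fix x assume "x \<in> carrier Tgrp"
  then have x: "x \<in> Tset" by (simp add: Tgrp_def)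
  have "\<forall>\<^sub>F i in cofinite. mulp x i = 0" using x unfolding Tset_iff
    by (auto simp: mulp_def elim: eventually_mono)
  then show "mulp x \<in> carrier Tgrp" by (simp add: Tgrp_def Tset_iff mulp_def modrange)
next
  fix x y assume "x \<in> carrier Tgrp" "y \<in> carrier Tgrp"
  show "mulp (x \<otimes>\<^bsub>Tgrp\<^esub> y) = mulp x \<otimes>\<^bsub>Tgrp\<^esub> mulp y"
    unfolding multT by (simp add: multP mulp_def fun_eq_iff mod_mult_right_eq mod_add_eq distrib_left)
qed

lemma T_not: "\<not> strongly_coHopfian Tgrp"
proof -
  have neq: "(mulp ^^ n) ` Tset \<noteq> (mulp ^^ Suc n) ` Tset" for n
    by (rule images_differ[OF unitv_T]) (auto intro: mulp_iter simp: Tset_iff)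
  have c: "carrier Tgrp = Tset" by (simp add: Tgrp_def)
  show ?thesis unfolding strongly_coHopfian_def c using mulp_hom neq by blast
qed

definition mulpm :: "nat \<Rightarrow> (nat \<Rightarrow> int) \<Rightarrow> nat \<Rightarrow> int" where
  "mulpm m y = (\<lambda>i. if i = m then (int (nth_prime i) * y i) mod ord_q i else y i)"

lemma mulpm_iter: "y \<in> carrier Pgrp \<Longrightarrow> (mulpm n ^^ k) y n = (int (nth_prime n) ^ k * y n) mod ord_q n"
proof (induction k)
  case 0 then show ?case by (simp add: carrier_mod)
next
  case (Suc k) then show ?case by (simp add: mulpm_def mod_mult_right_eq mult.assoc)
qed

lemma mulpm_hom: "mulpm m \<in> hom Ggrp Ggrp"
proof (rule homI)
  fix x assume "x \<in> carrier Ggrp"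
  then have x: "x \<in> Gset" by simp
  then have xc: "x \<in> carrier Pgrp" by (rule G_carrier)
  have c: "mulpm m x \<in> carrier Pgrp" using xc by (auto simp: carrierP mulpm_def)
  have "\<forall>\<^sub>F i in cofinite. mulpm m x i = x i"
    by (rule eventually_mono[of "\<lambda>i. i \<noteq> m"]) (auto simp: mulpm_def eventually_cofinite)
  then show "mulpm m x \<in> carrier Ggrp" using G_modify[OF x c] by simp
next
  fix x y assume "x \<in> carrier Ggrp" "y \<in> carrier Ggrp"
  show "mulpm m (x \<otimes>\<^bsub>Ggrp\<^esub> y) = mulpm m x \<otimes>\<^bsub>Ggrp\<^esub> mulpm m y"
    by (simp add: multP mulpm_def fun_eq_iff mod_mult_right_eq mod_add_eq distrib_left)
qed

lemma G_not_unif: "\<not> uniformly_strongly_coHopfian Ggrp"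
proof -
  have neq: "(mulpm m ^^ m) ` Gset \<noteq> (mulpm m ^^ Suc m) ` Gset" for m
    by (rule images_differ[OF subsetD[OF T_sub_G unitv_T]]) (auto intro: mulpm_iter G_carrier)
  show ?thesis unfolding uniformly_strongly_coHopfian_def
  proof
    assume "\<exists>m. \<forall>f\<in>hom Ggrp Ggrp. (f ^^ m) ` carrier Ggrp = (f ^^ Suc m) ` carrier Ggrp"
    then obtain m where h: "\<forall>f\<in>hom Ggrp Ggrp. (f ^^ m) ` carrier Ggrp = (f ^^ Suc m) ` carrier Ggrp" by blast
    have "(mulpm m ^^ m) ` carrier Ggrp = (mulpm m ^^ Suc m) ` carrier Ggrp" by (rule bspec[OF h mulpm_hom])
    then show False using neq[of m] by simp
  qed
qed


lemma smulP_G: "x \<in> Gset \<Longrightarrow> smulP c x \<in> Gset"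
proof -
  assume x: "x \<in> Gset"
  obtain k m where km: "k \<noteq> 0" "\<forall>\<^sub>F i in cofinite. (k * x i) mod ord_q i = m mod ord_q i"
    using x Gset_iff by blast
  have "\<forall>\<^sub>F i in cofinite. (k * smulP c x i) mod ord_q i = (c * m) mod ord_q i"
    using km(2)
  proof eventually_elim
    case (elim i)
    have "(k * smulP c x i) mod ord_q i = (c * (k * x i)) mod ord_q i"
      by (simp add: smulP_def mod_mult_right_eq algebra_simps)
    also have "\<dots> = (c * ((k * x i) mod ord_q i)) mod ord_q i" by (simp add: mod_mult_right_eq)
    also have "\<dots> = (c * m) mod ord_q i" using elim by (simp add: mod_mult_right_eq)
    finally show ?case .
  qed
  then show ?thesis using km(1) by (intro Gset_intro) (auto simp: smulP_def modrange)
qed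

lemma smulP_smulP: "smulP a (smulP b x) = smulP (a * b) x"
  by (simp add: smulP_def fun_eq_iff mod_mult_right_eq mult.assoc)

lemma invG: "x \<in> Gset \<Longrightarrow> inv\<^bsub>Ggrp\<^esub> x = smulP (-1) x"
proof -
  assume x: "x \<in> Gset"
  interpret comm_group Ggrp by (rule G_comm)
  show ?thesis
  proof (rule inv_equality)
    show "smulP (- 1) x \<otimes>\<^bsub>Ggrp\<^esub> x = \<one>\<^bsub>Ggrp\<^esub>"
      by (simp add: multP oneP smulP_def fun_eq_iff mod_add_left_eq)
  qed (use x smulP_G in auto)
qed

lemma powG_nat: "x \<in> Gset \<Longrightarrow> x [^]\<^bsub>Ggrp\<^esub> (n::nat) = smulP (int n) x"
proof (induction n)
  case 0 then show ?case by (simp add: oneP smulP_def)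
next
  case (Suc n)
  then show ?case
    by (simp add: multP smulP_def fun_eq_iff mod_add_left_eq mod_add_right_eq carrier_mod[OF G_carrier] algebra_simps)
qed

lemma powG_int: "x \<in> Gset \<Longrightarrow> x [^]\<^bsub>Ggrp\<^esub> (k::int) = smulP k x"
proof -
  assume x: "x \<in> Gset"
  show ?thesis
  proof (cases "k < 0")
    case True
    have "x [^]\<^bsub>Ggrp\<^esub> k = inv\<^bsub>Ggrp\<^esub> (x [^]\<^bsub>Ggrp\<^esub> (nat (-k)))"
      by (simp only: int_pow_def2 True if_True)
    also have "\<dots> = inv\<^bsub>Ggrp\<^esub> (smulP (int (nat (-k))) x)" by (simp only: powG_nat[OF x])
    also have "\<dots> = smulP (-1) (smulP (int (nat (-k))) x)" by (rule invG[OF smulP_G[OF x]])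
    also have "\<dots> = smulP k x" using True by (simp add: smulP_smulP)
    finally show ?thesis .
  next
    case False
    have "x [^]\<^bsub>Ggrp\<^esub> k = x [^]\<^bsub>Ggrp\<^esub> (nat k)"
      by (simp only: int_pow_def2 False if_False)
    also have "\<dots> = smulP (int (nat k)) x" by (simp only: powG_nat[OF x])
    also have "\<dots> = smulP k x" using False by simp
    finally show ?thesis .
  qed
qed

lemma T_subgroup: "subgroup Tset Ggrp"
proof -
  interpret comm_group Ggrp by (rule G_comm)
  show ?thesis
  proof (rule subgroupI)
    show "Tset \<subseteq> carrier Ggrp" using T_sub_G by simp
    show "Tset \<noteq> {}" using Tset_iff[of "\<lambda>i. 0"] carrierP by auto
  next
    fix a assume a: "a \<in> Tset"
    then have aG: "a \<in> Gset" using T_sub_G by blast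
    have "\<forall>\<^sub>F i in cofinite. smulP (-1) a i = 0" using a unfolding Tset_iff
      by (auto simp: smulP_def elim: eventually_mono)
    then show "inv\<^bsub>Ggrp\<^esub> a \<in> Tset" by (simp add: invG[OF aG] Tset_iff smulP_def modrange)
  next
    fix a b assume a: "a \<in> Tset" and b: "b \<in> Tset"
    have ea: "\<forall>\<^sub>F i in cofinite. a i = 0" and eb: "\<forall>\<^sub>F i in cofinite. b i = 0"
      using a b unfolding Tset_iff by auto
    have "\<forall>\<^sub>F i in cofinite. (a \<otimes>\<^bsub>Ggrp\<^esub> b) i = 0"
      using ea eb by eventually_elim (simp add: multP)
    then show "a \<otimes>\<^bsub>Ggrp\<^esub> b \<in> Tset" by (simp add: Tset_iff multP modrange)
  qed
qed

lemma T_normal: "Tset \<lhd> Ggrp"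
  using comm_group.subgroup_imp_normal[OF G_comm T_subgroup] .

lemma Q_comm: "comm_group (Ggrp Mod Tset)"
  using comm_group.abelian_FactGroup[OF G_comm T_subgroup] .

lemma ceq:
  assumes x: "x \<in> Gset" and y: "y \<in> Gset"
  shows "Tset #>\<^bsub>Ggrp\<^esub> x = Tset #>\<^bsub>Ggrp\<^esub> y \<longleftrightarrow> (\<forall>\<^sub>F i in cofinite. x i = y i)"
proof -
  interpret comm_group Ggrp by (rule G_comm)
  have xy: "x \<otimes>\<^bsub>Ggrp\<^esub> inv\<^bsub>Ggrp\<^esub> y = (\<lambda>i. (x i - y i) mod ord_q i)"
    by (simp add: invG[OF y] multP smulP_def fun_eq_iff mod_add_right_eq)
  have xc: "x \<in> carrier Ggrp" "y \<in> carrier Ggrp" using x y by auto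
  have "Tset #>\<^bsub>Ggrp\<^esub> x = Tset #>\<^bsub>Ggrp\<^esub> y \<longleftrightarrow> x \<in> Tset #>\<^bsub>Ggrp\<^esub> y"
    using repr_independence[OF _ xc(2) T_subgroup] repr_independence[OF _ xc(1) T_subgroup]
      rcos_self[OF xc(1) T_subgroup] by blast
  also have "\<dots> \<longleftrightarrow> x \<otimes>\<^bsub>Ggrp\<^esub> inv\<^bsub>Ggrp\<^esub> y \<in> Tset"
    by (rule subgroup.rcos_module[OF T_subgroup is_group xc(2) xc(1)])
  also have "\<dots> \<longleftrightarrow> (\<forall>\<^sub>F i in cofinite. (x i - y i) mod ord_q i = 0)"
    unfolding xy Tset_iff by (simp add: modrange)
  also have "\<dots> \<longleftrightarrow> (\<forall>\<^sub>F i in cofinite. x i = y i)"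
  proof -
    have "(x i - y i) mod ord_q i = 0 \<longleftrightarrow> x i = y i" for i
    proof -
      have "(x i - y i) mod ord_q i = 0 \<longleftrightarrow> x i mod ord_q i = y i mod ord_q i"
        by (simp add: mod_eq_dvd_iff dvd_eq_mod_eq_0)
      then show ?thesis using carrier_mod[OF G_carrier[OF x]] carrier_mod[OF G_carrier[OF y]] by simp
    qed
    then show ?thesis by simp
  qed
  finally show ?thesis .
qed

lemma cpow:
  assumes "x \<in> Gset"
  shows "(Tset #>\<^bsub>Ggrp\<^esub> x) [^]\<^bsub>Ggrp Mod Tset\<^esub> (k::int) = Tset #>\<^bsub>Ggrp\<^esub> smulP k x"
  using normal.FactGroup_int_pow[OF T_normal, of x k] assms powG_int by simp

lemma zeroG: "(\<lambda>i. 0) \<in> Gset" using T_sub_G Tset_iff[of "\<lambda>i. 0"] carrierP by auto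

lemma Q_one: "\<one>\<^bsub>Ggrp Mod Tset\<^esub> = Tset #>\<^bsub>Ggrp\<^esub> (\<lambda>i. 0)"
proof -
  interpret comm_group Ggrp by (rule G_comm)
  have "Tset #>\<^bsub>Ggrp\<^esub> \<one>\<^bsub>Ggrp\<^esub> = Tset" using T_sub_G by (intro coset_mult_one) simp
  then show ?thesis by (simp add: oneP)
qed

lemma Q_carrier: "carrier (Ggrp Mod Tset) = (\<lambda>x. Tset #>\<^bsub>Ggrp\<^esub> x) ` Gset"
  by (simp add: carrier_FactGroup)

lemma cof_zero:
  assumes "x \<in> Gset" "k \<noteq> 0" "\<forall>\<^sub>F i in cofinite. (k * x i) mod ord_q i = 0"
  shows "\<forall>\<^sub>F i in cofinite. x i = 0"
  using assms(3) ev_coprime[OF assms(2)]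
proof eventually_elim
  case (elim i)
  then have "ord_q i dvd x i" using coprime_dvd_mult_right_iff[of "ord_q i" k "x i"]
    by (simp add: coprime_commute dvd_eq_mod_eq_0)
  then show ?case using carrier_mod[OF G_carrier[OF assms(1)], of i] by (simp add: dvd_eq_mod_eq_0)
qed

abbreviation QG where "QG \<equiv> Ggrp Mod Tset"

lemma Q_sch: "strongly_coHopfian (Ggrp Mod Tset)"
proof (rule abstract_sch[OF Q_comm])
  fix XX and k :: int
  assume XX: "XX \<in> carrier (Ggrp Mod Tset)" and k: "k \<noteq> 0"
    and e: "XX [^]\<^bsub>QG\<^esub> k = \<one>\<^bsub>QG\<^esub>"
  obtain x where x: "x \<in> Gset" "XX = Tset #>\<^bsub>Ggrp\<^esub> x" using XX Q_carrier by auto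
  have "\<forall>\<^sub>F i in cofinite. smulP k x i = 0"
    using e unfolding x(2) cpow[OF x(1)] Q_one ceq[OF smulP_G[OF x(1)] zeroG] .
  then have "\<forall>\<^sub>F i in cofinite. x i = 0" using cof_zero[OF x(1) k] by (simp add: smulP_def)
  then show "XX = \<one>\<^bsub>QG\<^esub>" unfolding x(2) Q_one ceq[OF x(1) zeroG] .
next
  fix XX and k :: int
  assume XX: "XX \<in> carrier (Ggrp Mod Tset)" and k: "k \<noteq> 0"
  obtain x where x: "x \<in> Gset" "XX = Tset #>\<^bsub>Ggrp\<^esub> x" using XX Q_carrier by auto
  define w where "w = (\<lambda>i. (minv k (ord_q i) * x i) mod ord_q i)"
  have ev: "\<forall>\<^sub>F i in cofinite. smulP k w i = x i"
    using ev_coprime[OF k]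
  proof eventually_elim
    case (elim i)
    have "smulP k w i = ((k * minv k (ord_q i)) * x i) mod ord_q i"
      by (simp add: smulP_def w_def mod_mult_right_eq mult.assoc)
    also have "\<dots> = (((k * minv k (ord_q i)) mod ord_q i) * x i) mod ord_q i"
      by (simp add: mod_mult_left_eq)
    also have "\<dots> = x i" using minv[OF elim] ord_q_gt1[of i] carrier_mod[OF G_carrier[OF x(1)]] by simp
    finally show ?case .
  qed
  have wc: "w \<in> carrier Pgrp" by (simp add: w_def modrange)
  have "smulP k w \<in> Gset" using G_modify[OF x(1) _ ev] by (simp add: smulP_def modrange)
  then have wG: "w \<in> Gset" using G_pure[OF wc k] by (simp add: smulP_def)
  have "(Tset #>\<^bsub>Ggrp\<^esub> w) [^]\<^bsub>QG\<^esub> k = XX"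
    unfolding cpow[OF wG] x(2) ceq[OF smulP_G[OF wG] x(1)] by (rule ev)
  then show "\<exists>W\<in>carrier (Ggrp Mod Tset). W [^]\<^bsub>QG\<^esub> k = XX"
    using wG Q_carrier by blast
next
  fix XX UU
  assume XX: "XX \<in> carrier (Ggrp Mod Tset)" and UU: "UU \<in> carrier (Ggrp Mod Tset)"
    and UU1: "UU \<noteq> \<one>\<^bsub>QG\<^esub>"
  obtain x where x: "x \<in> Gset" "XX = Tset #>\<^bsub>Ggrp\<^esub> x" using XX Q_carrier by auto
  obtain g where g: "g \<in> Gset" "UU = Tset #>\<^bsub>Ggrp\<^esub> g" using UU Q_carrier by auto
  obtain k1 m1 where km1: "k1 > 0" "\<forall>\<^sub>F i in cofinite. (k1 * g i) mod ord_q i = m1 mod ord_q i"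
    using Gset_pos[OF g(1)] by blast
  obtain k2 m2 where km2: "k2 > 0" "\<forall>\<^sub>F i in cofinite. (k2 * x i) mod ord_q i = m2 mod ord_q i"
    using Gset_pos[OF x(1)] by blast
  have m1: "m1 \<noteq> 0"
  proof
    assume "m1 = 0"
    then have "\<forall>\<^sub>F i in cofinite. g i = 0" using cof_zero[OF g(1), of k1] km1 by simp
    then show False using UU1 unfolding g(2) Q_one ceq[OF g(1) zeroG] by simp
  qed
  have "\<forall>\<^sub>F i in cofinite. smulP (m1 * k2) x i = smulP (m2 * k1) g i"
    using km1(2) km2(2)
  proof eventually_elim
    case (elim i)
    have "smulP (m1 * k2) x i = (m1 * ((k2 * x i) mod ord_q i)) mod ord_q i"
      by (simp add: smulP_def mod_mult_right_eq mult.assoc)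
    also have "\<dots> = (m1 * m2) mod ord_q i" using elim by (simp add: mod_mult_right_eq)
    also have "\<dots> = (m2 * ((k1 * g i) mod ord_q i)) mod ord_q i" using elim
      by (simp add: mod_mult_right_eq mult.commute)
    also have "\<dots> = smulP (m2 * k1) g i"
      by (simp add: smulP_def mod_mult_right_eq mult.assoc)
    finally show ?case .
  qed
  then have eqp: "XX [^]\<^bsub>QG\<^esub> (m1 * k2) = UU [^]\<^bsub>QG\<^esub> (m2 * k1)"
    unfolding x(2) g(2) cpow[OF x(1)] cpow[OF g(1)] ceq[OF smulP_G[OF x(1)] smulP_G[OF g(1)]] .
  have nz: "m1 * k2 \<noteq> 0" using m1 km2(1) by simp
  show "\<exists>(a::int) (b::int). a \<noteq> 0 \<and> XX [^]\<^bsub>QG\<^esub> a = UU [^]\<^bsub>QG\<^esub> b"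
    using nz eqp by blast
qed


lemma G_group: "group Ggrp" using G_comm comm_group.axioms(2) by blast

lemma modeq_dvd: "(A mod (n::int) = B mod n) \<longleftrightarrow> n dvd (A - B)"
  by (rule mod_eq_dvd_iff)

lemma p_dvd_q: "int (nth_prime i) dvd ord_q i" unfolding ord_q_eq by simp

lemma p_not_dvd:
  assumes "(k * a) mod ord_q i = m mod ord_q i" "\<not> int (nth_prime i) dvd m"
  shows "\<not> int (nth_prime i) dvd a"
proof
  assume d: "int (nth_prime i) dvd a"
  have "ord_q i dvd k * a - m" using assms(1) by (simp add: modeq_dvd)
  then have h1: "int (nth_prime i) dvd k * a - m" by (rule dvd_trans[OF p_dvd_q])
  have h2: "int (nth_prime i) dvd k * a" using d by simp
  have "int (nth_prime i) dvd k * a - (k * a - m)" by (rule dvd_diff[OF h2 h1])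
  then show False using assms(2) by simp
qed

context
  fixes f assumes f: "f \<in> hom Ggrp Ggrp"
begin

lemma fG: "x \<in> Gset \<Longrightarrow> f x \<in> Gset"
  using f by (auto simp: hom_def)

lemma fmult: "x \<in> Gset \<Longrightarrow> y \<in> Gset \<Longrightarrow> f (x \<otimes>\<^bsub>Pgrp\<^esub> y) = f x \<otimes>\<^bsub>Pgrp\<^esub> f y"
  using f by (auto simp: hom_def)

lemma fsmul: "x \<in> Gset \<Longrightarrow> f (smulP (int n) x) = smulP (int n) (f x)"
proof -
  assume x: "x \<in> Gset"
  have "f (x [^]\<^bsub>Ggrp\<^esub> n) = f x [^]\<^bsub>Ggrp\<^esub> n"
    using hom_nat_pow[OF f _ G_group G_group] x by simp
  then show ?thesis using powG_nat x fG by simp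
qed

definition acoef :: "nat \<Rightarrow> int" where "acoef i = f (unitv i) i"

lemma unitvG: "unitv i \<in> Gset" using T_sub_G unitv_T by blast

lemma f_coord:
  assumes y: "y \<in> Gset"
  shows "f y i = (acoef i * y i) mod ord_q i"
proof -
  have yc: "y \<in> carrier Pgrp" by (rule G_carrier[OF y])
  define w where "w = y(i := 0)"
  have wc: "w \<in> carrier Pgrp" using yc by (auto simp: w_def carrierP)
  have "\<forall>\<^sub>F j in cofinite. w j = y j"
    by (rule eventually_mono[of "\<lambda>j. j \<noteq> i"]) (auto simp: w_def eventually_cofinite)
  then have wG: "w \<in> Gset" using G_modify[OF y wc] by simp
  define v where "v = (\<lambda>j. if j = i then 0 else (minv (ord_q i) (ord_q j) * w j) mod ord_q j)"
  have vc: "v \<in> carrier Pgrp" by (auto simp: v_def carrierP)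
  have sv: "smulP (ord_q i) v = w"
  proof
    fix j show "smulP (ord_q i) v j = w j"
    proof (cases "j = i")
      case True then show ?thesis by (simp add: smulP_def v_def w_def)
    next
      case False
      have "smulP (ord_q i) v j = ((ord_q i * minv (ord_q i) (ord_q j)) * w j) mod ord_q j"
        using False by (simp add: smulP_def v_def mod_mult_right_eq mult.assoc)
      also have "\<dots> = (((ord_q i * minv (ord_q i) (ord_q j)) mod ord_q j) * w j) mod ord_q j"
        by (simp add: mod_mult_left_eq)
      also have "\<dots> = w j" using minv[OF coprime_qq[OF False[symmetric]]] ord_q_gt1[of j] carrier_mod[OF wc]
        by simp
      finally show ?thesis .
    qed
  qed
  have vG: "v \<in> Gset" using G_pure[OF vc, of "ord_q i"] sv wG ord_q_pos[of i]
    by (simp add: smulP_def[symmetric])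
  have q0: "0 \<le> ord_q i" using ord_q_pos[of i] by linarith
  have qi: "ord_q i = int (nat (ord_q i))" using q0 by simp
  have "f w = smulP (ord_q i) (f v)" using fsmul[OF vG, of "nat (ord_q i)"] sv qi by simp
  then have fw: "f w i = 0" by (simp add: smulP_def)
  have yi: "y i = int (nat (y i))" using yc by (simp add: carrierP)
  have ydec: "y = w \<otimes>\<^bsub>Pgrp\<^esub> smulP (y i) (unitv i)"
  proof
    fix j show "y j = (w \<otimes>\<^bsub>Pgrp\<^esub> smulP (y i) (unitv i)) j"
      using carrier_mod[OF yc, of j] by (auto simp: multP smulP_def unitv_def w_def)
  qed
  have uG: "smulP (y i) (unitv i) \<in> Gset" by (rule smulP_G[OF unitvG])
  have "f y = f w \<otimes>\<^bsub>Pgrp\<^esub> f (smulP (y i) (unitv i))"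
    using ydec fmult[OF wG uG] by simp
  also have "f (smulP (y i) (unitv i)) = smulP (y i) (f (unitv i))"
    using fsmul[OF unitvG, of "nat (y i)"] yi by simp
  finally show ?thesis using fw by (simp add: multP smulP_def acoef_def mult.commute)
qed

lemma onesG: "(\<lambda>i. 1) \<in> Gset"
  using ord_q_gt1 by (intro Gset_intro[of _ 1 1]) (auto simp: carrierP)

lemma acoef_G: "acoef \<in> Gset"
proof -
  have "f (\<lambda>i. 1) = acoef"
  proof
    fix i
    have "f (unitv i) \<in> carrier Pgrp" using fG[OF unitvG] G_carrier by blast
    then show "f (\<lambda>i. 1) i = acoef i"
      using f_coord[OF onesG, of i] carrier_mod by (simp add: acoef_def)
  qed
  then show ?thesis using fG[OF onesG] by simp
qed

lemma f_iter: "y \<in> Gset \<Longrightarrow> (f ^^ n) y \<in> Gset \<and> (f ^^ n) y = (\<lambda>i. (acoef i ^ n * y i) mod ord_q i)"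
proof (induction n)
  case 0 then show ?case using carrier_mod[OF G_carrier] by auto
next
  case (Suc n)
  then have m: "(f ^^ n) y \<in> Gset" and eq: "(f ^^ n) y = (\<lambda>i. (acoef i ^ n * y i) mod ord_q i)" by auto
  have s: "(f ^^ Suc n) y = f ((f ^^ n) y)" by simp
  have "(f ^^ Suc n) y = (\<lambda>i. (acoef i ^ Suc n * y i) mod ord_q i)"
    unfolding s
  proof
    fix i show "f ((f ^^ n) y) i = (acoef i ^ Suc n * y i) mod ord_q i"
      using f_coord[OF m, of i] eq by (simp add: mod_mult_right_eq mult.assoc)
  qed
  then show ?case using fG[OF m] s by simp
qed

lemma f_sch: "\<exists>n. (f ^^ n) ` Gset = (f ^^ Suc n) ` Gset"
proof -
  obtain k m where km: "k > 0" "\<forall>\<^sub>F i in cofinite. (k * acoef i) mod ord_q i = m mod ord_q i"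
    using Gset_pos[OF acoef_G] by blast
  let ?p = "\<lambda>i. int (nth_prime i)"
  have fin: "finite {i. ?p i dvd acoef i \<and> acoef i \<noteq> 0}"
  proof (cases "m = 0")
    case True
    then have "\<forall>\<^sub>F i in cofinite. acoef i = 0" using cof_zero[OF acoef_G, of k] km by simp
    then have "finite {i. acoef i \<noteq> 0}" by (simp add: eventually_cofinite)
    then show ?thesis by (rule rev_finite_subset) auto
  next
    case False
    have "\<forall>\<^sub>F i in cofinite. \<not> ?p i dvd acoef i" using km(2) ev_ndvd[OF False]
    proof eventually_elim
      case (elim i)
      show ?case by (rule p_not_dvd[OF elim])
    qed
    then have "finite {i. ?p i dvd acoef i}" by (simp add: eventually_cofinite)
    then show ?thesis by (rule rev_finite_subset) auto
  qed
  obtain N where N: "{i. ?p i dvd acoef i \<and> acoef i \<noteq> 0} \<subseteq> {..<N}"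
    using finite_nat_bounded[OF fin] by blast
  define n where "n = Suc N"
  have nil: "ord_q i dvd acoef i ^ n" if "?p i dvd acoef i" for i
  proof (cases "acoef i = 0")
    case True then show ?thesis by (simp add: n_def)
  next
    case False
    then have "i < N" using N that by blast
    then have "Suc i \<le> n" by (simp add: n_def)
    then have "?p i ^ Suc i dvd ?p i ^ n" by (rule le_imp_power_dvd)
    moreover have "?p i ^ n dvd acoef i ^ n" using that by (rule dvd_power_same)
    ultimately show ?thesis unfolding ord_q_eq by (rule dvd_trans)
  qed
  define s where "s = (\<lambda>i. if ?p i dvd acoef i then 0 else minv (acoef i) (ord_q i))"
  have sinv: "ord_q i dvd acoef i * s i - 1" if "\<not> ?p i dvd acoef i" for i
    using minv[of "acoef i" "ord_q i"] that coprime_q_iff[of "acoef i" i] by (simp add: s_def modeq_dvd)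
  have "(f ^^ n) ` Gset \<subseteq> (f ^^ Suc n) ` Gset"
  proof
    fix z assume "z \<in> (f ^^ n) ` Gset"
    then obtain y where y: "y \<in> Gset" "z = (f ^^ n) y" by blast
    define x where "x = (\<lambda>i. (s i * y i) mod ord_q i)"
    have xc: "x \<in> carrier Pgrp" by (simp add: x_def modrange)
    have xG: "x \<in> Gset"
    proof (cases "m = 0")
      case True
      then have "\<forall>\<^sub>F i in cofinite. acoef i = 0" using cof_zero[OF acoef_G, of k] km by simp
      then have "\<forall>\<^sub>F i in cofinite. (1 * x i) mod ord_q i = 0 mod ord_q i"
        by eventually_elim (simp add: x_def s_def)
      then show ?thesis using xc by (intro Gset_intro[of x 1 0]) auto
    next
      case False
      obtain k1 m1 where km1: "k1 > 0" "\<forall>\<^sub>F i in cofinite. (k1 * y i) mod ord_q i = m1 mod ord_q i"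
        using Gset_pos[OF y(1)] by blast
      have "\<forall>\<^sub>F i in cofinite. \<not> ?p i dvd acoef i" using km(2) ev_ndvd[OF False]
      proof eventually_elim
        case (elim i)
        show ?case by (rule p_not_dvd[OF elim])
      qed
      then have "\<forall>\<^sub>F i in cofinite. ((k1 * m) * x i) mod ord_q i = (k * m1) mod ord_q i"
        using km(2) km1(2)
      proof eventually_elim
        case (elim i)
        have d1: "ord_q i dvd m - k * acoef i" using elim(2) by (simp add: modeq_dvd dvd_diff_commute)
        have d2: "ord_q i dvd acoef i * s i - 1" using sinv elim(1) by blast
        have d3: "ord_q i dvd k1 * y i - m1" using elim(3) by (simp add: modeq_dvd)
        have eq: "(k1 * m) * (s i * y i) - k * m1
            = (k1 * s i * y i) * (m - k * acoef i) + (k * (k1 * y i)) * (acoef i * s i - 1) + k * (k1 * y i - m1)"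
          by (simp add: algebra_simps)
        have "ord_q i dvd (k1 * m) * (s i * y i) - k * m1"
          unfolding eq using d1 d2 d3 by (intro dvd_add dvd_mult) auto
        then have "((k1 * m) * (s i * y i)) mod ord_q i = (k * m1) mod ord_q i" by (simp add: modeq_dvd)
        then show ?case by (simp add: x_def mod_mult_right_eq)
      qed
      then show ?thesis using xc False km1(1) by (intro Gset_intro[of x "k1 * m" "k * m1"]) auto
    qed
    have "(f ^^ Suc n) x = (f ^^ n) y"
    proof -
      have "(acoef i ^ Suc n * x i) mod ord_q i = (acoef i ^ n * y i) mod ord_q i" for i
      proof (cases "?p i dvd acoef i")
        case True
        have "ord_q i dvd acoef i ^ Suc n * x i" using nil[OF True] by simp
        moreover have "ord_q i dvd acoef i ^ n * y i" using nil[OF True] by simp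
        ultimately show ?thesis by (simp add: dvd_eq_mod_eq_0)
      next
        case False
        have "ord_q i dvd acoef i ^ Suc n * (s i * y i) - acoef i ^ n * y i"
        proof -
          have "acoef i ^ Suc n * (s i * y i) - acoef i ^ n * y i = (acoef i ^ n * y i) * (acoef i * s i - 1)"
            by (simp add: algebra_simps)
          then show ?thesis using sinv[OF False] by simp
        qed
        then show ?thesis by (simp add: x_def mod_mult_right_eq modeq_dvd)
      qed
      then show ?thesis using f_iter[OF xG, of "Suc n"] f_iter[OF y(1), of n] by (simp add: fun_eq_iff)
    qed
    then show "z \<in> (f ^^ Suc n) ` Gset" using xG y(2) by (metis image_eqI)
  qed
  moreover have "(f ^^ Suc n) ` Gset \<subseteq> (f ^^ n) ` Gset"
  proof
    fix z assume "z \<in> (f ^^ Suc n) ` Gset"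
    then obtain y where y: "y \<in> Gset" "z = (f ^^ Suc n) y" by blast
    have "(f ^^ Suc n) y = (f ^^ n) (f y)" by (simp only: funpow_Suc_right comp_apply)
    then have "z = (f ^^ n) (f y)" using y(2) by simp
    then show "z \<in> (f ^^ n) ` Gset" using fG[OF y(1)] by blast
  qed
  ultimately show ?thesis by blast
qed

end

lemma G_sch: "strongly_coHopfian Ggrp"
  unfolding strongly_coHopfian_def carrierG using f_sch by blast


theorem mainTheorem15:
  shows "strongly_coHopfian Ggrp \<and> strongly_coHopfian (Ggrp Mod Tset)
         \<and> \<not> strongly_coHopfian Tgrp \<and> \<not> uniformly_strongly_coHopfian Ggrp"
  using G_sch Q_sch T_not G_not_unif by blast

end
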